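(* Let $R$ be a tolerance relation on $\{1,\ldots,n\}$ and $A=A(R)$. For $x\in M_n(\mathbb{C})$ let $\varphi_x:M_n(\mathbb{C})\to\mathbb{C}$, $\varphi_x(a):=\mathrm{Tr}(x^*a)$. Then the map $(A,\succeq)\to(A^*,\geq)$ sending $x\in A$ to $\varphi_x|_A$ is an isomorphism of ordered vector spaces (i.e. an isomorphism of the underlying real vector spaces such that $x\succeq 0$ if and only if $\varphi_x|_A\ge 0$).
   Context: A tolerance relation on a set $X$ is a reflexive and symmetric relation. $T:M_n(\mathbb{C})\to M_n(\mathbb{C})$ is $T(b)=\sum_{(i,j)\in R}E_{ii}bE_{jj}$ (setting entries in positions $(i,j)\notin R$ to zero) and $A(R)=T(M_n(\mathbb{C}))$, the matrices vanishing outside $R$. For $a\in A(R)$, $a\succeq 0$ means $a=T(b)$ for some positive semidefinite $b\in M_n(\mathbb{C})$. $A^*$ is the dual space of $A$, ordered by: $\varphi\ge0$ iff $\varphi(a)\ge 0$ for every positive semidefinite matrix $a\in A$. *)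

theory Defs
  imports "HOL-Analysis.Analysis"
begin

text \<open>Matrices in M_n(C) are modelled as complex^'n^'n, the index type 'n
  being an arbitrary finite type with CARD('n) = n.\<close>

definition tolerance :: "('n \<times> 'n) set \<Rightarrow> bool" where
  "tolerance R \<longleftrightarrow> (\<forall>i. (i, i) \<in> R) \<and> (\<forall>i j. (i, j) \<in> R \<longrightarrow> (j, i) \<in> R)"

definition matunit :: "'n::finite \<Rightarrow> 'n \<Rightarrow> complex^'n^'n" where
  "matunit i j = (\<chi> k l. if k = i \<and> l = j then 1 else 0)"

definition adj :: "complex^'n^'n \<Rightarrow> complex^'n^'n" where
  "adj x = (\<chi> i j. cnj (x $ j $ i))"

definition psd :: "complex^'n^'n \<Rightarrow> bool" where
  "psd b \<longleftrightarrow> adj b = b \<and>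
     (\<forall>v :: complex^'n. Im (\<Sum>i\<in>UNIV. cnj (v $ i) * (b *v v) $ i) = 0
                    \<and> 0 \<le> Re (\<Sum>i\<in>UNIV. cnj (v $ i) * (b *v v) $ i))"

definition Tmap :: "('n::finite \<times> 'n) set \<Rightarrow> complex^'n^'n \<Rightarrow> complex^'n^'n" where
  "Tmap R b = (\<Sum>(i, j)\<in>R. matunit i i ** b ** matunit j j)"

definition Aspace :: "('n::finite \<times> 'n) set \<Rightarrow> (complex^'n^'n) set" where
  "Aspace R = range (Tmap R)"

definition Apos :: "('n::finite \<times> 'n) set \<Rightarrow> complex^'n^'n \<Rightarrow> bool" where
  "Apos R a \<longleftrightarrow> (\<exists>b. psd b \<and> a = Tmap R b)"

definition phi :: "complex^'n^'n \<Rightarrow> complex^'n^'n \<Rightarrow> complex" where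
  "phi x a = trace (adj x ** a)"

definition dual_space :: "(complex^'n^'n) set \<Rightarrow> (complex^'n^'n \<Rightarrow> complex) set" where
  "dual_space A = {f \<in> extensional A.
     (\<forall>a\<in>A. \<forall>b\<in>A. f (a + b) = f a + f b) \<and> (\<forall>c. \<forall>a\<in>A. f (\<chi> i j. c * a $ i $ j) = c * f a)}"

definition dual_nonneg :: "(complex^'n^'n) set \<Rightarrow> (complex^'n^'n \<Rightarrow> complex) \<Rightarrow> bool" where
  "dual_nonneg A f \<longleftrightarrow> (\<forall>a\<in>A. psd a \<longrightarrow> Im (f a) = 0 \<and> 0 \<le> Re (f a))"

end

theory Submission
  imports Defs
begin

lemma phi_sum: "phi x a = (\<Sum>k\<in>UNIV. \<Sum>l\<in>UNIV. cnj (x$k$l) * a$k$l)"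
  unfolding phi_def trace_def adj_def matrix_matrix_mult_def
  by (simp, rule sum.swap)

lemma matunit_prod:
  "matunit i i ** b ** matunit j j = (\<chi> k l. if k = i \<and> l = j then b$i$j else 0)"
proof -
  have 1: "matunit i i ** b = (\<chi> k m. if k = i then b$i$m else 0)"
    unfolding matunit_def matrix_matrix_mult_def
    by (simp add: vec_eq_iff if_distrib[where f="\<lambda>x. x * _"] sum.delta cong: if_cong)
  have 2: "c ** matunit j j = (\<chi> k l. if l = j then c$k$j else 0)" for c :: "complex^_^_"
    unfolding matunit_def matrix_matrix_mult_def
    by (simp add: vec_eq_iff if_distrib[where f="\<lambda>x. _ * x"] sum.delta' cong: if_cong)
  show ?thesis unfolding 1 2 by (simp add: vec_eq_iff)
qed

lemma Tmap_eq:
  fixes R :: "('n::finite \<times> 'n) set"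
  shows "Tmap R b = (\<chi> k l. if (k,l) \<in> R then b$k$l else 0)"
proof -
  have fin: "finite R" by (rule finite_subset[of _ UNIV]) auto
  have "(\<Sum>x\<in>R. if k = fst x \<and> l = snd x then b $ fst x $ snd x else 0) = (if (k,l) \<in> R then b$k$l else 0)" for k l
  proof -
    have "(\<Sum>x\<in>R. if k = fst x \<and> l = snd x then b $ fst x $ snd x else 0) = (\<Sum>x\<in>R. if x = (k,l) then b $ k $ l else 0)"
      by (rule sum.cong) auto
    also have "\<dots> = (if (k,l) \<in> R then b$k$l else 0)" using fin by (simp add: sum.delta')
    finally show ?thesis .
  qed
  then show ?thesis
    unfolding Tmap_def matunit_prod
    by (simp add: vec_eq_iff case_prod_beta)
qed

lemma Aspace_eq: "Aspace R = {a. \<forall>k l. (k,l) \<notin> R \<longrightarrow> a$k$l = 0}"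
proof -
  have "a \<in> range (Tmap R)" if "\<forall>k l. (k,l) \<notin> R \<longrightarrow> a$k$l = 0" for a
  proof
    show "a = Tmap R a" using that by (auto simp: Tmap_eq vec_eq_iff)
  qed simp
  then show ?thesis unfolding Aspace_def by (auto simp: Tmap_eq)
qed

lemma inner_mat: "(x::complex^'n^'n) \<bullet> a = (\<Sum>k\<in>UNIV. \<Sum>l\<in>UNIV. x$k$l \<bullet> a$k$l)"
  by (simp add: inner_vec_def)

lemma inner_cpx: "(z::complex) \<bullet> w = Re (cnj z * w)"
  by (simp add: inner_complex_def)

lemma Re_phi: "Re (phi x a) = x \<bullet> a"
  by (simp add: phi_sum inner_mat inner_cpx)

definition qf :: "complex^'n^'n \<Rightarrow> complex^'n \<Rightarrow> complex" where
  "qf b v = (\<Sum>i\<in>UNIV. cnj (v $ i) * (b *v v) $ i)"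

lemma qf_alt: "qf b v = (\<Sum>k\<in>UNIV. \<Sum>l\<in>UNIV. cnj (v$k) * b$k$l * v$l)"
  unfolding qf_def matrix_vector_mult_def by (simp add: sum_distrib_left mult.assoc)

lemma psd_iff: "psd b \<longleftrightarrow> adj b = b \<and> (\<forall>v. Im (qf b v) = 0 \<and> 0 \<le> Re (qf b v))"
  unfolding psd_def qf_def by simp

lemma herm_iff: "adj b = b \<longleftrightarrow> (\<forall>k l. cnj (b$l$k) = b$k$l)"
  unfolding adj_def by (simp add: vec_eq_iff)

lemma sum_delta_r: fixes f :: "'n::finite \<Rightarrow> complex" shows "(\<Sum>l\<in>UNIV. f l * (if l = i then t else 0)) = f i * (t::complex)"
proof -
  have "f l * (if l = i then t else 0) = (if l = i then f i * t else 0)" for l by auto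
  then show ?thesis by simp
qed

lemma sum_delta_l: fixes f :: "'n::finite \<Rightarrow> complex" shows "(\<Sum>l\<in>UNIV. (if l = i then t else 0) * f l) = t * f i"
  using sum_delta_r[of f i t] by (simp add: mult.commute)

lemma qf_expand:
  assumes h: "adj b = b"
  shows "qf b (\<chi> k. v$k + (if k = i then t else 0)) =
    qf b v + t * (\<Sum>k\<in>UNIV. cnj (v$k) * b$k$i) + cnj (t * (\<Sum>k\<in>UNIV. cnj (v$k) * b$k$i))
      + cnj t * t * b$i$i"
proof -
  have hh: "cnj (b$l$k) = b$k$l" for k l using h by (simp add: herm_iff)
  have e1: "(\<Sum>k\<in>UNIV. \<Sum>l\<in>UNIV. cnj (v$k) * b$k$l * (if l = i then t else 0))
     = t * (\<Sum>k\<in>UNIV. cnj (v$k) * b$k$i)"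
  proof -
    have "(\<Sum>k\<in>UNIV. \<Sum>l\<in>UNIV. cnj (v$k) * b$k$l * (if l = i then t else 0)) = (\<Sum>k\<in>UNIV. cnj (v$k) * b$k$i * t)"
      by (rule sum.cong[OF refl]) (rule sum_delta_r)
    then show ?thesis by (simp add: sum_distrib_left ac_simps)
  qed
  have e2: "(\<Sum>k\<in>UNIV. \<Sum>l\<in>UNIV. cnj (if k = i then t else 0) * b$k$l * v$l)
     = cnj (t * (\<Sum>k\<in>UNIV. cnj (v$k) * b$k$i))"
  proof -
    have "(\<Sum>k\<in>UNIV. \<Sum>l\<in>UNIV. cnj (if k = i then t else 0) * b$k$l * v$l)
       = (\<Sum>l\<in>UNIV. cnj t * b$i$l * v$l)"
      apply (simp add: if_distrib[where f=cnj] if_distrib[where f="\<lambda>x. x * _"] sum.delta cong: if_cong)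
      apply (subst sum.swap) apply (simp add: sum.delta)
      done
    also have "\<dots> = cnj (t * (\<Sum>k\<in>UNIV. cnj (v$k) * b$k$i))"
      by (simp add: sum_distrib_left hh ac_simps)
    finally show ?thesis .
  qed
  have e3: "(\<Sum>k\<in>UNIV. \<Sum>l\<in>UNIV. cnj (if k = i then t else 0) * b$k$l * (if l = i then t else 0))
     = cnj t * t * b$i$i"
  proof -
    have "(\<Sum>k\<in>UNIV. \<Sum>l\<in>UNIV. cnj (if k = i then t else 0) * b$k$l * (if l = i then t else 0))
      = (\<Sum>k\<in>UNIV. \<Sum>l\<in>UNIV. if k = i then (if l = i then cnj t * t * b$i$i else 0) else 0)"
    proof -
      have "cnj (if k = i then t else 0) * b$k$l * (if l = i then t else 0) = (if k = i then (if l = i then cnj t * t * b$i$i else 0) else 0)" for k l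
        by auto
      then show ?thesis by (simp only:)
    qed
    also have "\<dots> = (\<Sum>k\<in>UNIV. if k = i then cnj t * t * b$i$i else 0)"
      by (rule sum.cong[OF refl]) (simp add: sum.delta)
    also have "\<dots> = cnj t * t * b$i$i" by simp
    finally show ?thesis .
  qed
  have "qf b (\<chi> k. v$k + (if k = i then t else 0)) =
     (\<Sum>k\<in>UNIV. \<Sum>l\<in>UNIV. cnj (v$k) * b$k$l * v$l + cnj (v$k) * b$k$l * (if l = i then t else 0)
       + cnj (if k = i then t else 0) * b$k$l * v$l + cnj (if k = i then t else 0) * b$k$l * (if l = i then t else 0))"
    unfolding qf_alt by (intro sum.cong refl) (simp only: vec_lambda_beta complex_cnj_add distrib_left distrib_right add_ac)
  also have "\<dots> = qf b v + t * (\<Sum>k\<in>UNIV. cnj (v$k) * b$k$i) + cnj (t * (\<Sum>k\<in>UNIV. cnj (v$k) * b$k$i))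
      + cnj t * t * b$i$i"
    by (simp only: sum.distrib e1 e2 e3 qf_alt)
  finally show ?thesis .
qed

lemma qf_zero: "qf b 0 = 0" by (simp add: qf_alt)

lemma psd_diag: assumes "psd b" shows "Im (b$i$i) = 0" "0 \<le> Re (b$i$i)"
proof -
  have h: "adj b = b" using assms by (simp add: psd_iff)
  have "qf b (\<chi> k. (0::complex^'a)$k + (if k = i then 1 else 0)) = b$i$i"
    using qf_expand[OF h, of 0 i 1] by (simp add: qf_zero)
  then show "Im (b$i$i) = 0" "0 \<le> Re (b$i$i)" using assms unfolding psd_iff by metis+
qed

lemma real_cs:
  fixes Q P d :: real
  assumes "\<And>s. 0 \<le> Q - 2 * s * P + s^2 * P * d" "0 \<le> P" "0 \<le> d"
  shows "P \<le> d*Q"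
proof (cases "P = 0")
  case True
  then show ?thesis using assms(1)[of 0] assms(3) by simp
next
  case False
  then have P: "P > 0" using assms(2) by simp
  show ?thesis
  proof (cases "d = 0")
    case True
    have "0 \<le> Q - 2 * ((Q+1)/(2*P)) * P" using assms(1)[of "(Q+1)/(2*P)"] True by simp
    also have "\<dots> = -1" using P by (simp add: field_simps)
    finally show ?thesis by simp
  next
    case False
    then have d: "d > 0" using assms(3) by simp
    have "0 \<le> Q - 2*(1/d)*P + (1/d)^2*P*d" by (rule assms(1))
    also have "\<dots> = Q - P/d" using d by (simp add: field_simps power2_eq_square)
    finally show ?thesis using d by (simp add: field_simps)
  qed
qed

lemma psd_cs:
  assumes "psd b"
  shows "(cmod (\<Sum>k\<in>UNIV. cnj (v$k) * b$k$i))^2 \<le> Re (b$i$i) * Re (qf b v)"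
proof -
  define p where "p = (\<Sum>k\<in>UNIV. cnj (v$k) * b$k$i)"
  have h: "adj b = b" using assms by (simp add: psd_iff)
  have bii: "b$i$i = of_real (Re (b$i$i))" using psd_diag(1)[OF assms, of i] by (simp add: complex_eq_iff)
  have pp: "cnj p * p = of_real ((cmod p)^2)" by (subst complex_norm_square) (simp add: mult.commute)
  have "0 \<le> Re (qf b v) - 2 * s * (cmod p)^2 + s^2 * (cmod p)^2 * Re (b$i$i)" for s
  proof -
    define t where "t = - of_real s * cnj p"
    have "0 \<le> Re (qf b (\<chi> k. v$k + (if k = i then t else 0)))" using assms by (simp add: psd_iff)
    also have "\<dots> = Re (qf b v + t * p + cnj (t * p) + cnj t * t * b$i$i)"
      using qf_expand[OF h, of v i t] by (simp add: p_def)
    also have "t * p = - of_real (s * (cmod p)^2)" unfolding t_def using pp by (simp add: ac_simps)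
    also have "cnj t * t = of_real (s^2 * (cmod p)^2)" unfolding t_def using pp
      by (simp add: power2_eq_square ac_simps)
    finally show ?thesis by (subst (asm) bii) (simp add: ac_simps)
  qed
  then have "(cmod p)^2 \<le> Re (b$i$i) * Re (qf b v)"
    by (intro real_cs) (auto simp: psd_diag[OF assms])
  then show ?thesis by (simp add: p_def)
qed

lemma psd_zero_diag:
  assumes "psd b" "Re (b$i$i) = 0"
  shows "b$l$i = 0" "b$i$l = 0"
proof -
  define v :: "complex^'a" where "v = (\<chi> m. if m = l then 1 else 0)"
  have "(\<Sum>k\<in>UNIV. cnj (v$k) * b$k$i) = b$l$i"
  proof -
    have "(\<Sum>k\<in>UNIV. cnj (v$k) * b$k$i) = (\<Sum>k\<in>UNIV. (if k = l then 1 else 0) * b$k$i)"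
      by (rule sum.cong) (auto simp: v_def)
    then show ?thesis by (simp add: sum_delta_l)
  qed
  then have "(cmod (b$l$i))^2 \<le> 0" using psd_cs[OF assms(1), of v i] assms(2) by simp
  then show "b$l$i = 0" by simp
  then show "b$i$l = 0" using assms(1) unfolding psd_iff herm_iff by (metis complex_cnj_zero)
qed

lemma qf_rank1_sub:
  "qf (\<chi> k l. b$k$l - u$k * cnj (u$l)) v = qf b v - of_real ((cmod (\<Sum>k\<in>UNIV. cnj (v$k) * u$k))^2)"
proof -
  define q where "q = (\<Sum>k\<in>UNIV. cnj (v$k) * u$k)"
  have cq: "cnj q = (\<Sum>l\<in>UNIV. v$l * cnj (u$l))" unfolding q_def by (simp add: mult.commute)
  have "qf (\<chi> k l. b$k$l - u$k * cnj (u$l)) v = (\<Sum>k\<in>UNIV. \<Sum>l\<in>UNIV. cnj (v$k) * b$k$l * v$l - (cnj (v$k) * u$k) * (v$l * cnj (u$l)))"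
    unfolding qf_alt by (intro sum.cong refl) (simp add: algebra_simps)
  also have "\<dots> = qf b v - q * cnj q"
    unfolding qf_alt cq q_def by (simp add: sum_subtractf sum_product)
  also have "q * cnj q = of_real ((cmod q)^2)" by (subst complex_norm_square) simp
  finally show ?thesis by (simp add: q_def)
qed

lemma chol:
  assumes "finite S"
  shows "psd b \<Longrightarrow> (\<forall>k l. b$k$l \<noteq> 0 \<longrightarrow> k \<in> S \<and> l \<in> S) \<Longrightarrow>
    \<exists>U. \<forall>k l. b$k$l = (\<Sum>r\<in>S. (U r)$k * cnj ((U r)$l))"
  using assms
proof (induction S arbitrary: b rule: finite_induct)
  case empty
  then show ?case by auto
next
  case (insert i S)
  have h: "cnj (b$l$k) = b$k$l" for k l using insert.prems(1) unfolding psd_iff herm_iff by blast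
  define d where "d = Re (b$i$i)"
  have d0: "0 \<le> d" using psd_diag[OF insert.prems(1)] d_def by simp
  have bii: "b$i$i = of_real d" using psd_diag(1)[OF insert.prems(1), of i] d_def by (simp add: complex_eq_iff)
  define u :: "complex^'a" where "u = (\<chi> k. b$k$i / of_real (sqrt d))"
  define b' where "b' = (\<chi> k l. b$k$l - u$k * cnj (u$l))"
  have supp: "b'$k$l \<noteq> 0 \<longrightarrow> k \<in> S \<and> l \<in> S" for k l
  proof (cases "d = 0")
    case True
    then have u0: "u = 0" unfolding u_def by (simp add: vec_eq_iff)
    have "b$i$m = 0" "b$m$i = 0" for m
      using psd_zero_diag[OF insert.prems(1), of i m] True unfolding d_def by simp_all
    then show ?thesis using insert.prems(2) u0 unfolding b'_def by auto
  next
    case False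
    then have dp: "d > 0" using d0 by simp
    have s: "of_real (sqrt d) * of_real (sqrt d) = (of_real d :: complex)"
      using d0 by (simp flip: of_real_mult)
    have sne: "(of_real (sqrt d) :: complex) \<noteq> 0" using dp by simp
    have r1: "b'$i$m = 0" for m
    proof -
      have "u$i * cnj (u$m) = b$i$i * b$i$m / (of_real (sqrt d) * of_real (sqrt d))"
        unfolding u_def by (simp add: h)
      also have "\<dots> = b$i$m" using s bii dp by simp
      finally show ?thesis unfolding b'_def by simp
    qed
    have r2: "b'$m$i = 0" for m
    proof -
      have "u$m * cnj (u$i) = b$m$i * cnj (b$i$i) / (of_real (sqrt d) * of_real (sqrt d))"
        unfolding u_def by simp
      also have "\<dots> = b$m$i" using s bii dp by simp
      finally show ?thesis unfolding b'_def by simp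
    qed
    have z: "b$x$y = 0" if "x \<notin> insert i S \<or> y \<notin> insert i S" for x y
      using insert.prems(2) that by blast
    have "b'$k$l = 0" if "k \<notin> insert i S \<or> l \<notin> insert i S"
      using that z[of k l] z[of k i] z[of l i] unfolding b'_def u_def by auto
    then have "b'$k$l \<noteq> 0 \<Longrightarrow> k \<in> insert i S \<and> l \<in> insert i S" by blast
    then show ?thesis using r1 r2 by blast
  qed
  have psd': "psd b'"
    unfolding psd_iff
  proof (intro conjI allI)
    show "adj b' = b'" unfolding herm_iff b'_def by (simp add: h)
    fix v
    define p where "p = (\<Sum>k\<in>UNIV. cnj (v$k) * b$k$i)"
    have q: "(\<Sum>k\<in>UNIV. cnj (v$k) * u$k) = p / of_real (sqrt d)"
      unfolding p_def u_def by (simp add: sum_divide_distrib)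
    have cs: "(cmod p)^2 \<le> d * Re (qf b v)" using psd_cs[OF insert.prems(1), of v i] by (simp add: p_def d_def)
    have qfv: "0 \<le> Re (qf b v)" "Im (qf b v) = 0" using insert.prems(1) by (auto simp: psd_iff)
    have "(cmod (p / of_real (sqrt d)))^2 \<le> Re (qf b v)"
    proof (cases "d = 0")
      case True then show ?thesis using qfv by simp
    next
      case False
      then have dp: "d > 0" using d0 by simp
      have "(cmod (p / of_real (sqrt d)))^2 = (cmod p)^2 / d"
        using d0 by (simp add: norm_divide power_divide)
      also have "\<dots> \<le> Re (qf b v)" using cs dp by (simp add: divide_le_eq mult.commute)
      finally show ?thesis .
    qed
    then show "Im (qf b' v) = 0" "0 \<le> Re (qf b' v)"
      unfolding b'_def qf_rank1_sub q using qfv by simp_all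
  qed
  obtain U' where U': "\<forall>k l. b'$k$l = (\<Sum>r\<in>S. (U' r)$k * cnj ((U' r)$l))"
    using insert.IH[OF psd'] supp by blast
  define U where "U = U'(i := u)"
  have "b$k$l = (\<Sum>r\<in>insert i S. (U r)$k * cnj ((U r)$l))" for k l
  proof -
    have "(\<Sum>r\<in>S. (U r)$k * cnj ((U r)$l)) = (\<Sum>r\<in>S. (U' r)$k * cnj ((U' r)$l))"
      using insert.hyps(2) unfolding U_def by (intro sum.cong) auto
    then show ?thesis using insert.hyps U'[rule_format, of k l] unfolding U_def b'_def by (simp add: algebra_simps)
  qed
  then show ?case by blast
qed


lemma psd_decomp:
  assumes "psd (b::complex^'n::finite^'n)"
  shows "\<exists>U. \<forall>k l. b$k$l = (\<Sum>r\<in>(UNIV::'n set). (U r)$k * cnj ((U r)$l))"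
  using chol[of "UNIV::'n set" b] assms by simp

lemma trace_pos:
  assumes "psd a" "psd (b::complex^'n::finite^'n)"
  shows "Im (\<Sum>k\<in>UNIV. \<Sum>l\<in>UNIV. cnj (b$k$l) * a$k$l) = 0"
    "0 \<le> Re (\<Sum>k\<in>UNIV. \<Sum>l\<in>UNIV. cnj (b$k$l) * a$k$l)"
proof -
  obtain U where U: "\<And>k l. b$k$l = (\<Sum>r\<in>(UNIV::'n set). (U r)$k * cnj ((U r)$l))"
    using psd_decomp[OF assms(2)] by blast
  have "(\<Sum>k\<in>UNIV. \<Sum>l\<in>UNIV. cnj (b$k$l) * a$k$l)
      = (\<Sum>k\<in>UNIV. \<Sum>l\<in>UNIV. \<Sum>r\<in>UNIV. cnj ((U r)$k) * a$k$l * (U r)$l)"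
    unfolding U by (simp add: sum_distrib_right sum_distrib_left ac_simps)
  also have "\<dots> = (\<Sum>k\<in>UNIV. \<Sum>r\<in>UNIV. \<Sum>l\<in>UNIV. cnj ((U r)$k) * a$k$l * (U r)$l)"
    by (rule sum.cong[OF refl]) (rule sum.swap)
  also have "\<dots> = (\<Sum>r\<in>UNIV. \<Sum>k\<in>UNIV. \<Sum>l\<in>UNIV. cnj ((U r)$k) * a$k$l * (U r)$l)"
    by (rule sum.swap)
  also have "\<dots> = (\<Sum>r\<in>UNIV. qf a (U r))" by (simp add: qf_alt)
  finally have e: "(\<Sum>k\<in>UNIV. \<Sum>l\<in>UNIV. cnj (b$k$l) * a$k$l) = (\<Sum>r\<in>UNIV. qf a (U r))" .
  have "Im (qf a v) = 0" "0 \<le> Re (qf a v)" for v using assms(1) by (auto simp: psd_iff)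
  then show "Im (\<Sum>k\<in>UNIV. \<Sum>l\<in>UNIV. cnj (b$k$l) * a$k$l) = 0"
    "0 \<le> Re (\<Sum>k\<in>UNIV. \<Sum>l\<in>UNIV. cnj (b$k$l) * a$k$l)"
    unfolding e by (auto simp: sum_nonneg)
qed

definition outer :: "complex^'n \<Rightarrow> complex^'n^'n" where
  "outer v = (\<chi> k l. v$k * cnj (v$l))"

lemma qf_outer: "qf (outer u) v = of_real ((cmod (\<Sum>k\<in>UNIV. cnj (v$k) * u$k))^2)"
proof -
  define q where "q = (\<Sum>k\<in>UNIV. cnj (v$k) * u$k)"
  have cq: "cnj q = (\<Sum>l\<in>UNIV. v$l * cnj (u$l))" unfolding q_def by (simp add: mult.commute)
  have "qf (outer u) v = (\<Sum>k\<in>UNIV. \<Sum>l\<in>UNIV. (cnj (v$k) * u$k) * (v$l * cnj (u$l)))"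
    unfolding qf_alt outer_def by (intro sum.cong refl) (simp add: algebra_simps)
  also have "\<dots> = q * cnj q"
    unfolding cq q_def by (simp add: sum_product)
  also have "q * cnj q = of_real ((cmod q)^2)" by (subst complex_norm_square) simp
  finally show ?thesis by (simp add: q_def)
qed

lemma psd_outer: "psd (outer u)"
  unfolding psd_iff qf_outer by (auto simp: herm_iff outer_def)

lemma qf_add: "qf (b1 + b2) v = qf b1 v + qf b2 v"
  unfolding qf_alt by (simp add: algebra_simps sum.distrib)

lemma scaleR_comp: "(c *\<^sub>R b)$k$l = of_real c * (b$k$l :: complex)"
  by (simp add: scaleR_conv_of_real[where 'a=complex])

lemma qf_scale: "qf (c *\<^sub>R b) v = of_real c * qf b v"
  unfolding qf_alt scaleR_comp by (simp add: sum_distrib_left ac_simps)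

lemma adj_add: "adj (b1 + b2) = adj b1 + adj b2"
  unfolding adj_def by (simp add: vec_eq_iff)

lemma adj_scale: "adj (c *\<^sub>R b) = c *\<^sub>R adj b"
  unfolding adj_def by (simp add: vec_eq_iff scaleR_comp)

lemma psd_add: "psd b1 \<Longrightarrow> psd b2 \<Longrightarrow> psd (b1 + b2)"
  unfolding psd_iff by (simp add: qf_add adj_add)

lemma psd_scale: "psd b \<Longrightarrow> 0 \<le> c \<Longrightarrow> psd (c *\<^sub>R b)"
  unfolding psd_iff by (simp add: qf_scale adj_scale)

lemma Tmap_add: "Tmap R (b1 + b2) = Tmap R b1 + Tmap R b2"
  by (simp add: Tmap_eq vec_eq_iff)

lemma Tmap_scale: "Tmap R (c *\<^sub>R b) = c *\<^sub>R Tmap R b"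
  by (simp add: Tmap_eq vec_eq_iff)

lemma qf_expand_gen:
  "qf b (\<chi> k. v$k + (if k = i then t else 0)) =
    qf b v + t * (\<Sum>k\<in>UNIV. cnj (v$k) * b$k$i) + cnj t * (\<Sum>l\<in>UNIV. b$i$l * v$l)
      + cnj t * t * b$i$i"
proof -
  have e1: "(\<Sum>k\<in>UNIV. \<Sum>l\<in>UNIV. cnj (v$k) * b$k$l * (if l = i then t else 0))
     = t * (\<Sum>k\<in>UNIV. cnj (v$k) * b$k$i)"
  proof -
    have "(\<Sum>k\<in>UNIV. \<Sum>l\<in>UNIV. cnj (v$k) * b$k$l * (if l = i then t else 0)) = (\<Sum>k\<in>UNIV. cnj (v$k) * b$k$i * t)"
      by (rule sum.cong[OF refl]) (rule sum_delta_r)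
    then show ?thesis by (simp add: sum_distrib_left ac_simps)
  qed
  have e2: "(\<Sum>k\<in>UNIV. \<Sum>l\<in>UNIV. cnj (if k = i then t else 0) * b$k$l * v$l)
     = cnj t * (\<Sum>l\<in>UNIV. b$i$l * v$l)"
  proof -
    have "(\<Sum>k\<in>UNIV. \<Sum>l\<in>UNIV. cnj (if k = i then t else 0) * b$k$l * v$l)
       = (\<Sum>l\<in>UNIV. cnj t * b$i$l * v$l)"
      apply (simp add: if_distrib[where f=cnj] if_distrib[where f="\<lambda>x. x * _"] sum.delta cong: if_cong)
      apply (subst sum.swap) apply (simp add: sum.delta)
      done
    also have "\<dots> = cnj t * (\<Sum>l\<in>UNIV. b$i$l * v$l)"
      by (simp add: sum_distrib_left ac_simps)
    finally show ?thesis .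
  qed
  have e3: "(\<Sum>k\<in>UNIV. \<Sum>l\<in>UNIV. cnj (if k = i then t else 0) * b$k$l * (if l = i then t else 0))
     = cnj t * t * b$i$i"
  proof -
    have "(\<Sum>k\<in>UNIV. \<Sum>l\<in>UNIV. cnj (if k = i then t else 0) * b$k$l * (if l = i then t else 0))
      = (\<Sum>k\<in>UNIV. \<Sum>l\<in>UNIV. if k = i then (if l = i then cnj t * t * b$i$i else 0) else 0)"
    proof -
      have "cnj (if k = i then t else 0) * b$k$l * (if l = i then t else 0) = (if k = i then (if l = i then cnj t * t * b$i$i else 0) else 0)" for k l
        by auto
      then show ?thesis by (simp only:)
    qed
    also have "\<dots> = (\<Sum>k\<in>UNIV. if k = i then cnj t * t * b$i$i else 0)"
      by (rule sum.cong[OF refl]) (simp add: sum.delta)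
    also have "\<dots> = cnj t * t * b$i$i" by simp
    finally show ?thesis .
  qed
  have "qf b (\<chi> k. v$k + (if k = i then t else 0)) =
     (\<Sum>k\<in>UNIV. \<Sum>l\<in>UNIV. cnj (v$k) * b$k$l * v$l + cnj (v$k) * b$k$l * (if l = i then t else 0)
       + cnj (if k = i then t else 0) * b$k$l * v$l + cnj (if k = i then t else 0) * b$k$l * (if l = i then t else 0))"
    unfolding qf_alt by (intro sum.cong refl) (simp only: vec_lambda_beta complex_cnj_add distrib_left distrib_right add_ac)
  also have "\<dots> = qf b v + t * (\<Sum>k\<in>UNIV. cnj (v$k) * b$k$i) + cnj t * (\<Sum>l\<in>UNIV. b$i$l * v$l)
      + cnj t * t * b$i$i"
    by (simp only: sum.distrib e1 e2 e3 qf_alt)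
  finally show ?thesis .
qed

lemma qf_two:
  assumes "i \<noteq> j"
  shows "qf b (\<chi> k. (if k = i then 1 else 0) + (if k = j then t else 0)) =
    b$i$i + t * b$i$j + cnj t * b$j$i + cnj t * t * b$j$j"
proof -
  define v :: "complex^'a" where "v = (\<chi> k. if k = i then 1 else 0)"
  have v: "(\<chi> k. (if k = i then 1 else 0) + (if k = j then t else 0)) = (\<chi> k. v$k + (if k = j then t else 0))"
    by (simp add: v_def)
  have "qf b v = qf b (\<chi> k. (0::complex^'a)$k + (if k = i then 1 else 0))" by (simp add: v_def)
  also have "\<dots> = b$i$i" using qf_expand_gen[of b 0 i 1] by (simp add: qf_zero)
  finally have q1: "qf b v = b$i$i" .
  have s1: "(\<Sum>k\<in>UNIV. cnj (v$k) * b$k$j) = b$i$j"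
  proof -
    have "(\<Sum>k\<in>UNIV. cnj (v$k) * b$k$j) = (\<Sum>k\<in>UNIV. (if k = i then 1 else 0) * b$k$j)"
      by (rule sum.cong) (auto simp: v_def)
    then show ?thesis by (simp add: sum_delta_l)
  qed
  have s2: "(\<Sum>l\<in>UNIV. b$j$l * v$l) = b$j$i"
  proof -
    have "(\<Sum>l\<in>UNIV. b$j$l * v$l) = (\<Sum>l\<in>UNIV. b$j$l * (if l = i then 1 else 0))"
      by (rule sum.cong) (auto simp: v_def)
    then show ?thesis by (simp add: sum_delta_r)
  qed
  show ?thesis unfolding v qf_expand_gen q1 s1 s2 ..
qed


lemma finR: "finite (R :: ('n::finite \<times> 'n) set)"
  by (rule finite_subset[of _ UNIV]) auto

lemma A_add: "x \<in> Aspace R \<Longrightarrow> y \<in> Aspace R \<Longrightarrow> x + y \<in> Aspace R"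
  by (simp add: Aspace_eq)
lemma A_diff: "x \<in> Aspace R \<Longrightarrow> y \<in> Aspace R \<Longrightarrow> x - y \<in> Aspace R"
  by (simp add: Aspace_eq)
lemma A_scaleR: "x \<in> Aspace R \<Longrightarrow> r *\<^sub>R x \<in> Aspace R"
  by (simp add: Aspace_eq)
lemma A_cmul: "x \<in> Aspace R \<Longrightarrow> (\<chi> i j. c * x$i$j) \<in> Aspace R"
  by (simp add: Aspace_eq)
lemma A_zero: "0 \<in> Aspace R"
  by (simp add: Aspace_eq)
lemma Tmap_in_A: "Tmap R b \<in> Aspace R"
  by (simp add: Aspace_def)
lemma Tmap_id: "a \<in> Aspace R \<Longrightarrow> Tmap R a = a"
  by (auto simp: Aspace_eq Tmap_eq vec_eq_iff)

lemma phi_add_left: "phi (x + y) a = phi x a + phi y a"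
  by (simp add: phi_sum distrib_right sum.distrib)
lemma phi_diff_left: "phi (x - y) a = phi x a - phi y a"
  by (simp add: phi_sum left_diff_distrib sum_subtractf)
lemma phi_scaleR_left: "phi (r *\<^sub>R x) a = r *\<^sub>R phi x a"
  by (simp add: phi_sum scaleR_comp scaleR_conv_of_real[where 'a=complex] sum_distrib_left ac_simps)
lemma phi_add_right: "phi x (a + b) = phi x a + phi x b"
  by (simp add: phi_sum distrib_left sum.distrib)
lemma phi_cmul_right: "phi x (\<chi> i j. c * a$i$j) = c * phi x a"
  by (simp add: phi_sum sum_distrib_left ac_simps)

lemma dsum_pairs: "(\<Sum>k\<in>UNIV. \<Sum>l\<in>UNIV. g k l) = (\<Sum>p\<in>(UNIV::('n::finite \<times> 'm::finite) set). g (fst p) (snd p))"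
  by (simp add: sum.cartesian_product split_beta)

lemma dual_zero:
  assumes "f \<in> dual_space (Aspace R)"
  shows "f 0 = 0"
proof -
  have "f (\<chi> i j. 0 * (0::complex^'a^'a)$i$j) = 0 * f 0"
    using assms A_zero unfolding dual_space_def by blast
  moreover have "(\<chi> i j. 0 * (0::complex^'a^'a)$i$j) = 0" by (simp add: vec_eq_iff)
  ultimately show ?thesis by simp
qed

lemma dual_sum:
  assumes "f \<in> dual_space (Aspace R)" "finite F"
  shows "(\<forall>p\<in>F. g p \<in> Aspace R) \<Longrightarrow> f (\<Sum>p\<in>F. g p) = (\<Sum>p\<in>F. f (g p))"
  using assms(2)
proof (induction F rule: finite_induct)
  case empty
  then show ?case using dual_zero[OF assms(1)] by simp
next
  case (insert q F)
  have s: "(\<Sum>p\<in>F. g p) \<in> Aspace R"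
    using insert.prems by (induction F rule: infinite_finite_induct) (auto simp: A_zero A_add)
  have "f (\<Sum>p\<in>insert q F. g p) = f (g q + (\<Sum>p\<in>F. g p))" using insert.hyps by simp
  also have "\<dots> = f (g q) + f (\<Sum>p\<in>F. g p)"
    using assms(1) s insert.prems unfolding dual_space_def by blast
  finally show ?case using insert by simp
qed

lemma matunit_in_A: "(k,l) \<in> R \<Longrightarrow> matunit k l \<in> Aspace R"
  by (auto simp: Aspace_eq matunit_def)

lemma dual_repr:
  fixes R :: "('n::finite \<times> 'n) set"
  assumes f: "f \<in> dual_space (Aspace R)"
  shows "\<exists>x\<in>Aspace R. restrict (phi x) (Aspace R) = f"
proof
  define x :: "complex^'n^'n" where "x = (\<chi> k l. if (k,l) \<in> R then cnj (f (matunit k l)) else 0)"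
  show "x \<in> Aspace R" by (simp add: Aspace_eq x_def)
  show "restrict (phi x) (Aspace R) = f"
  proof
    fix a
    show "restrict (phi x) (Aspace R) a = f a"
    proof (cases "a \<in> Aspace R")
      case False
      then show ?thesis using f unfolding dual_space_def extensional_def by auto
    next
      case True
      define g where "g p = (\<chi> i j. a$fst p$snd p * matunit (fst p) (snd p) $i$j)" for p
      have "a = (\<Sum>p\<in>R. g p)"
      proof -
        have "(\<Sum>p\<in>R. g p)$k$l = a$k$l" for k l
        proof -
          have "(\<Sum>p\<in>R. g p)$k$l = (\<Sum>p\<in>R. if p = (k,l) then a$k$l else 0)"
            unfolding g_def matunit_def sum_component vec_lambda_beta by (rule sum.cong[OF refl]) auto
          also have "\<dots> = (if (k,l) \<in> R then a$k$l else 0)" using finR by (simp add: sum.delta')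
          also have "\<dots> = a$k$l" using True by (auto simp: Aspace_eq)
          finally show ?thesis .
        qed
        then show ?thesis by (simp add: vec_eq_iff)
      qed
      moreover have "\<forall>p\<in>R. g p \<in> Aspace R"
        unfolding g_def using matunit_in_A A_cmul by fastforce
      ultimately have "f a = (\<Sum>p\<in>R. f (g p))"
        using dual_sum[OF f finR[of R], where g=g] by simp
      also have "\<dots> = (\<Sum>p\<in>R. a$fst p$snd p * f (matunit (fst p) (snd p)))"
      proof (rule sum.cong[OF refl])
        fix p assume "p \<in> R"
        then show "f (g p) = a$fst p$snd p * f (matunit (fst p) (snd p))"
          using f matunit_in_A[of "fst p" "snd p" R] unfolding dual_space_def g_def by auto
      qed
      also have "\<dots> = (\<Sum>p\<in>UNIV. if p \<in> R then a$fst p$snd p * f (matunit (fst p) (snd p)) else 0)"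
        using sum.inter_restrict[of "UNIV::('n\<times>'n) set" "\<lambda>p. a$fst p$snd p * f (matunit (fst p) (snd p))" R] by simp
      also have "\<dots> = phi x a"
        unfolding phi_sum dsum_pairs x_def by (intro sum.cong refl) (auto simp: mult.commute)
      finally show ?thesis using True by simp
    qed
  qed
qed


lemma re_qf: "Re (qf M v) = M \<bullet> outer v"
proof -
  have "Re (qf M v) = (\<Sum>k\<in>UNIV. \<Sum>l\<in>UNIV. Re (cnj (v$k) * M$k$l * v$l))"
    by (simp add: qf_alt)
  also have "\<dots> = (\<Sum>k\<in>UNIV. \<Sum>l\<in>UNIV. Re (cnj (M$k$l) * (v$k * cnj (v$l))))"
  proof (intro sum.cong refl)
    fix k l
    have eq: "cnj (cnj (v$k) * M$k$l * v$l) = cnj (M$k$l) * (v$k * cnj (v$l))" by (simp add: ac_simps)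
    have "Re (cnj (v$k) * M$k$l * v$l) = Re (cnj (cnj (v$k) * M$k$l * v$l))" by (simp only: cnj.sel)
    also have "\<dots> = Re (cnj (M$k$l) * (v$k * cnj (v$l)))" by (simp only: eq)
    finally show "Re (cnj (v$k) * M$k$l * v$l) = Re (cnj (M$k$l) * (v$k * cnj (v$l)))" .
  qed
  also have "\<dots> = M \<bullet> outer v" by (simp add: inner_mat inner_cpx outer_def)
  finally show ?thesis .
qed

lemma qf_herm_real:
  assumes "adj b = b"
  shows "Im (qf b v) = 0"
proof -
  have h: "cnj (b$l$k) = b$k$l" for k l using assms by (simp add: herm_iff)
  have "cnj (qf b v) = (\<Sum>k\<in>UNIV. \<Sum>l\<in>UNIV. v$k * cnj (b$k$l) * cnj (v$l))"
    by (simp add: qf_alt)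
  also have "\<dots> = (\<Sum>k\<in>UNIV. \<Sum>l\<in>UNIV. cnj (v$l) * b$l$k * v$k)"
    by (intro sum.cong refl) (simp add: ac_simps h)
  also have "\<dots> = qf b v" unfolding qf_alt by (rule sum.swap)
  finally have "cnj (qf b v) = qf b v" .
  then have "Im (cnj (qf b v)) = Im (qf b v)" by simp
  then show ?thesis by simp
qed

lemma inner_Tmap: "a \<bullet> Tmap R b = Tmap R a \<bullet> b"
  by (simp add: inner_mat Tmap_eq if_distrib[where f="\<lambda>x. _ \<bullet> x"] cong: if_cong)
     (intro sum.cong refl, auto)

definition hp :: "complex^'n^'n \<Rightarrow> complex^'n^'n" where
  "hp M = (\<chi> k l. (M$k$l + cnj (M$l$k)) / 2)"

lemma inner_hp:
  assumes G: "\<And>k l. cnj (G$l$k) = G$k$l"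
  shows "hp M \<bullet> G = M \<bullet> (G :: complex^'n::finite^'n)"
proof -
  have "hp M \<bullet> G = (\<Sum>k\<in>UNIV. \<Sum>l\<in>UNIV. Re (cnj (M$k$l) * G$k$l) / 2 + Re (M$l$k * G$k$l) / 2)"
    unfolding inner_mat inner_cpx hp_def by (intro sum.cong refl) (simp add: field_simps)
  also have "\<dots> = (\<Sum>k\<in>UNIV. \<Sum>l\<in>UNIV. Re (cnj (M$k$l) * G$k$l)) / 2 + (\<Sum>k\<in>UNIV. \<Sum>l\<in>UNIV. Re (M$l$k * G$k$l)) / 2"
    by (simp only: sum.distrib sum_divide_distrib)
  also have "(\<Sum>k\<in>UNIV. \<Sum>l\<in>UNIV. Re (M$l$k * G$k$l)) = (\<Sum>k\<in>UNIV. \<Sum>l\<in>UNIV. Re (cnj (M$l$k) * G$l$k))"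
  proof (intro sum.cong refl)
    fix k l
    have "Re (M$l$k * G$k$l) = Re (cnj (M$l$k * G$k$l))" by simp
    also have "\<dots> = Re (cnj (M$l$k) * G$l$k)" using G[where k=l and l=k] by simp
    finally show "Re (M$l$k * G$k$l) = Re (cnj (M$l$k) * G$l$k)" .
  qed
  also have "\<dots> = (\<Sum>k\<in>UNIV. \<Sum>l\<in>UNIV. Re (cnj (M$k$l) * G$k$l))" by (rule sum.swap)
  finally have f: "hp M \<bullet> G = (\<Sum>k\<in>UNIV. \<Sum>l\<in>UNIV. Re (cnj (M$k$l) * G$k$l)) / 2 + (\<Sum>k\<in>UNIV. \<Sum>l\<in>UNIV. Re (cnj (M$k$l) * G$k$l)) / 2" .
  have e: "M \<bullet> G = (\<Sum>k\<in>UNIV. \<Sum>l\<in>UNIV. Re (cnj (M$k$l) * G$k$l))" by (simp only: inner_mat inner_cpx)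
  show ?thesis unfolding f e by simp
qed

lemma phi_outer: "phi x (outer w) = cnj (qf x w)"
  by (simp add: phi_sum qf_alt outer_def ac_simps)

lemma qf_one: "qf b (\<chi> k. if k = i then 1 else 0) = b$i$i"
proof -
  have "qf b (\<chi> k. if k = i then 1 else 0) = qf b (\<chi> k. (0::complex^'a)$k + (if k = i then 1 else 0))" by simp
  also have "\<dots> = b$i$i" using qf_expand_gen[of b 0 i 1] by (simp add: qf_zero)
  finally show ?thesis .
qed

lemma dual_herm:
  fixes R :: "('n::finite \<times> 'n) set"
  assumes tol: "tolerance R" and x: "x \<in> Aspace R"
    and dn: "dual_nonneg (Aspace R) (restrict (phi x) (Aspace R))"
  shows "cnj (x$j$i) = x$i$j"
proof -
  have refl: "(k,k) \<in> R" for k using tol by (simp add: tolerance_def)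
  have sym: "(k,l) \<in> R \<Longrightarrow> (l,k) \<in> R" for k l using tol by (simp add: tolerance_def)
  have imq: "Im (qf x w) = 0" if "outer w \<in> Aspace R" for w
  proof -
    have "Im (phi x (outer w)) = 0" using dn that psd_outer[of w] unfolding dual_nonneg_def by auto
    then show ?thesis by (simp add: phi_outer)
  qed
  have diag: "Im (x$k$k) = 0" for k
  proof -
    have "outer (\<chi> m. if m = k then 1 else 0) \<in> Aspace R"
      by (auto simp: Aspace_eq outer_def refl)
    from imq[OF this] show ?thesis by (simp add: qf_one)
  qed
  show ?thesis
  proof (cases "(i,j) \<in> R")
    case False
    then have "(j,i) \<notin> R" using sym by blast
    then show ?thesis using False x by (simp add: Aspace_eq)
  next
    case True
    show ?thesis
    proof (cases "i = j")
      case True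
      then show ?thesis using diag[of i] by (simp add: complex_eq_iff)
    next
      case False
      have inA: "outer (\<chi> k. (if k = i then 1 else 0) + (if k = j then t else 0)) \<in> Aspace R" for t
        using True sym refl by (auto simp: Aspace_eq outer_def)
      have 1: "Im (x$i$i + x$i$j + x$j$i + x$j$j) = 0"
        using imq[OF inA[of 1]] qf_two[OF False, of x 1] by simp
      have 2: "Im (x$i$i + \<i> * x$i$j + cnj \<i> * x$j$i + cnj \<i> * \<i> * x$j$j) = 0"
        using imq[OF inA[of "\<i>"]] qf_two[OF False, of x "\<i>"] by simp
      show ?thesis using 1 2 diag[of i] diag[of j] by (simp add: complex_eq_iff)
    qed
  qed
qed


lemma outer_scale: "outer (c *\<^sub>R v) = (c^2) *\<^sub>R outer v"
  by (simp add: outer_def vec_eq_iff scaleR_comp scaleR_conv_of_real[where 'a=complex] power2_eq_square ac_simps)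

lemma Tout_eq: "Tmap R (outer v) = (\<chi> k l. (if (k,l) \<in> R then 1 else 0) * (v$k * cnj (v$l)))"
  by (simp add: Tmap_eq outer_def vec_eq_iff)

lemma Tout_cont: "continuous_on S (\<lambda>v. Tmap R (outer v))"
  unfolding Tout_eq by (intro continuous_intros)

lemma trace_Tout:
  assumes refl: "\<And>k. (k,k) \<in> R"
  shows "(mat 1 :: complex^'n::finite^'n) \<bullet> Tmap R (outer v) = (norm v)^2"
proof -
  have "(mat 1 :: complex^'n^'n) \<bullet> Tmap R (outer v) = (\<Sum>k\<in>UNIV. \<Sum>l\<in>UNIV. if l = k then Re (v$k * cnj (v$k)) else 0)"
    unfolding inner_mat inner_cpx by (intro sum.cong refl) (auto simp: mat_def Tout_eq refl)
  also have "\<dots> = (\<Sum>k\<in>UNIV. Re (cnj (v$k) * v$k))" by (simp add: mult.commute)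
  also have "\<dots> = v \<bullet> v" by (simp add: inner_vec_def inner_cpx)
  also have "\<dots> = (norm v)^2" by (simp add: power2_norm_eq_inner)
  finally show ?thesis .
qed

lemma dual_to_Apos:
  fixes R :: "('n::finite \<times> 'n) set"
  assumes tol: "tolerance R" and x: "x \<in> Aspace R"
    and dn: "dual_nonneg (Aspace R) (restrict (phi x) (Aspace R))"
  shows "Apos R x"
proof -
  have refl: "(k,k) \<in> R" for k using tol by (simp add: tolerance_def)
  have sym: "(k,l) \<in> R \<Longrightarrow> (l,k) \<in> R" for k l using tol by (simp add: tolerance_def)
  have xh: "cnj (x$l$k) = x$k$l" for k l using dual_herm[OF tol x dn] .
  define Tout where "Tout v = Tmap R (outer v)" for v :: "complex^'n"
  define K where "K = Tout ` sphere 0 1"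
  define C where "C = conic hull (convex hull K)"
  define P where "P = {Tmap R b | b. psd b}"
  have Kc: "compact K" unfolding K_def Tout_def
    by (intro compact_continuous_image Tout_cont compact_sphere)
  have Kne: "K \<noteq> {}" unfolding K_def by simp
  have hyp: "convex hull K \<subseteq> {M. (mat 1 :: complex^'n^'n) \<bullet> M = 1}"
  proof (rule hull_minimal)
    show "K \<subseteq> {M. (mat 1 :: complex^'n^'n) \<bullet> M = 1}"
      unfolding K_def Tout_def using trace_Tout[OF refl] by auto
  qed (rule convex_hyperplane)
  have n0: "0 \<notin> convex hull K" using hyp by auto
  have Cclosed: "closed C" unfolding C_def
    by (rule closed_conic_hull_strong) (use Kc n0 compact_convex_hull in blast)
  have Cconvex: "convex C" unfolding C_def by (simp add: convex_conic_hull)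
  have Cconic: "conic C" unfolding C_def by (rule conic_conic_hull)
  obtain y0 where y0: "y0 \<in> convex hull K" using Kne hull_inc by fastforce
  have C0: "0 \<in> C" using conicD[OF Cconic, of y0 0] y0 unfolding C_def by (simp add: hull_inc)
  have ToutC: "Tout v \<in> C" for v
  proof (cases "v = 0")
    case True
    have "Tout v = 0" unfolding Tout_def True by (simp add: Tmap_eq outer_def vec_eq_iff)
    then show ?thesis using C0 by simp
  next
    case False
    define w where "w = (1 / norm v) *\<^sub>R v"
    have w: "w \<in> sphere 0 1" using False by (simp add: w_def)
    have v: "v = norm v *\<^sub>R w" using False by (simp add: w_def)
    have "Tout v = (norm v)^2 *\<^sub>R Tout w"
      unfolding Tout_def by (subst v) (simp add: outer_scale Tmap_scale)
    moreover have "Tout w \<in> C" unfolding C_def K_def using w by (intro hull_inc) auto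
    ultimately show ?thesis using conicD[OF Cconic] by simp
  qed
  have Pconvex: "convex P"
    unfolding convex_def P_def
  proof (clarify)
    fix u v :: real and b1 b2 :: "complex^'n^'n" assume "0 \<le> u" "0 \<le> v" "u + v = 1" "psd b1" "psd b2"
    then show "\<exists>b. u *\<^sub>R Tmap R b1 + v *\<^sub>R Tmap R b2 = Tmap R b \<and> psd b"
      by (intro exI[of _ "u *\<^sub>R b1 + v *\<^sub>R b2"]) (simp add: Tmap_add Tmap_scale psd_add psd_scale)
  qed
  have Pconic: "conic P"
    unfolding conic_def P_def
  proof (clarify)
    fix c :: real and b :: "complex^'n^'n" assume "0 \<le> c" "psd b"
    then show "\<exists>b'. c *\<^sub>R Tmap R b = Tmap R b' \<and> psd b'"
      by (intro exI[of _ "c *\<^sub>R b"]) (simp add: Tmap_scale psd_scale)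
  qed
  have KP: "K \<subseteq> P" unfolding K_def P_def Tout_def using psd_outer by blast
  have CP: "C \<subseteq> P"
  proof -
    have "convex hull K \<subseteq> P" using hull_minimal[of K P convex] KP Pconvex by blast
    then show ?thesis unfolding C_def using hull_minimal[of "convex hull K" P conic] Pconic by blast
  qed
  have "x \<in> C"
  proof (rule ccontr)
    assume "x \<notin> C"
    then obtain a \<beta> where ax: "a \<bullet> x < \<beta>" and aC: "\<forall>c\<in>C. \<beta> < a \<bullet> c"
      using separating_hyperplane_closed_point[OF Cconvex Cclosed] by blast
    have b0: "\<beta> < 0" using aC C0 by auto
    have anonneg: "0 \<le> a \<bullet> c" if c: "c \<in> C" for c
    proof (rule ccontr)
      assume neg: "\<not> 0 \<le> a \<bullet> c"
      define s where "s = \<beta> / (a \<bullet> c)"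
      have s0: "0 \<le> s" using neg b0 by (simp add: s_def divide_nonpos_neg less_imp_le)
      have "s *\<^sub>R c \<in> C" using conicD[OF Cconic c s0] .
      then have "\<beta> < a \<bullet> (s *\<^sub>R c)" using aC by blast
      also have "a \<bullet> (s *\<^sub>R c) = \<beta>" using neg by (simp add: s_def)
      finally show False by simp
    qed
    define h0 where "h0 = Tmap R a"
    define h where "h = hp h0"
    have hA: "h \<in> Aspace R"
      unfolding Aspace_eq h_def hp_def h0_def Tmap_eq using sym by auto
    have hadj: "adj h = h" unfolding herm_iff h_def hp_def by (simp add: ac_simps)
    have hpsd: "psd h"
      unfolding psd_iff
    proof (intro conjI allI hadj)
      fix v
      show "Im (qf h v) = 0" by (rule qf_herm_real[OF hadj])
      have "Re (qf h v) = h \<bullet> outer v" by (rule re_qf)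
      also have "\<dots> = h0 \<bullet> outer v" unfolding h_def by (rule inner_hp) (simp add: outer_def)
      also have "\<dots> = a \<bullet> Tout v" unfolding h0_def Tout_def by (simp add: inner_Tmap)
      finally show "0 \<le> Re (qf h v)" using anonneg[OF ToutC] by simp
    qed
    have "0 \<le> Re (restrict (phi x) (Aspace R) h)" using dn hA hpsd unfolding dual_nonneg_def by blast
    then have "0 \<le> x \<bullet> h" using hA by (simp add: Re_phi)
    also have "x \<bullet> h = h0 \<bullet> x" unfolding h_def using inner_hp[of x h0] xh by (simp add: inner_commute)
    also have "\<dots> = a \<bullet> x" unfolding h0_def using inner_Tmap[of a R x] Tmap_id[OF x] by simp
    finally show False using ax b0 by simp
  qed
  then have "x \<in> P" using CP by blast
  then show ?thesis unfolding P_def Apos_def by blast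
qed


theorem proposition4p5:
  fixes R :: "('n::finite \<times> 'n) set"
  assumes "tolerance R"
  defines "\<Phi> \<equiv> (\<lambda>x. restrict (phi x) (Aspace R))"
  shows "(\<forall>x\<in>Aspace R. \<forall>y\<in>Aspace R. (\<forall>a\<in>Aspace R. \<Phi> (x + y) a = \<Phi> x a + \<Phi> y a))
    \<and> (\<forall>r::real. \<forall>x\<in>Aspace R. (\<forall>a\<in>Aspace R. \<Phi> (r *\<^sub>R x) a = r *\<^sub>R \<Phi> x a))
    \<and> bij_betw \<Phi> (Aspace R) (dual_space (Aspace R))
    \<and> (\<forall>x\<in>Aspace R. Apos R x \<longleftrightarrow> dual_nonneg (Aspace R) (\<Phi> x))"
proof -
  have P1: "\<forall>x\<in>Aspace R. \<forall>y\<in>Aspace R. (\<forall>a\<in>Aspace R. \<Phi> (x + y) a = \<Phi> x a + \<Phi> y a)"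
    unfolding \<Phi>_def by (simp add: phi_add_left)
  have P2: "\<forall>r::real. \<forall>x\<in>Aspace R. (\<forall>a\<in>Aspace R. \<Phi> (r *\<^sub>R x) a = r *\<^sub>R \<Phi> x a)"
    unfolding \<Phi>_def by (simp add: phi_scaleR_left)
  have inj: "inj_on \<Phi> (Aspace R)"
  proof (rule inj_onI)
    fix x y assume x: "x \<in> Aspace R" and y: "y \<in> Aspace R" and e: "\<Phi> x = \<Phi> y"
    have d: "x - y \<in> Aspace R" using A_diff[OF x y] .
    have "\<Phi> x (x - y) = \<Phi> y (x - y)" using e by simp
    then have "phi x (x - y) = phi y (x - y)" using d unfolding \<Phi>_def by simp
    then have "phi (x - y) (x - y) = 0" by (simp add: phi_diff_left)
    then have "(x - y) \<bullet> (x - y) = 0" using Re_phi[of "x - y" "x - y"] by simp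
    then show "x = y" by simp
  qed
  have img1: "\<Phi> x \<in> dual_space (Aspace R)" if x: "x \<in> Aspace R" for x
    unfolding dual_space_def \<Phi>_def
    by (auto simp: A_add A_cmul phi_add_right phi_cmul_right)
  have img2: "f \<in> \<Phi> ` Aspace R" if f: "f \<in> dual_space (Aspace R)" for f
    using dual_repr[OF f] unfolding \<Phi>_def by (metis image_eqI)
  have P3: "bij_betw \<Phi> (Aspace R) (dual_space (Aspace R))"
    unfolding bij_betw_def using inj img1 img2 by blast
  have P4: "Apos R x \<longleftrightarrow> dual_nonneg (Aspace R) (\<Phi> x)" if x: "x \<in> Aspace R" for x
  proof
    assume "Apos R x"
    then obtain b where b: "psd b" and xb: "x = Tmap R b" unfolding Apos_def by blast
    show "dual_nonneg (Aspace R) (\<Phi> x)"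
      unfolding dual_nonneg_def
    proof (intro ballI impI)
      fix a assume aA: "a \<in> Aspace R" and pa: "psd a"
      have "\<Phi> x a = (\<Sum>k\<in>UNIV. \<Sum>l\<in>UNIV. cnj (b$k$l) * a$k$l)"
        unfolding \<Phi>_def using aA unfolding phi_sum xb Tmap_eq
        by (simp add: Aspace_eq) (intro sum.cong refl, auto)
      then show "Im (\<Phi> x a) = 0 \<and> 0 \<le> Re (\<Phi> x a)" using trace_pos[OF pa b] by simp
    qed
  next
    assume "dual_nonneg (Aspace R) (\<Phi> x)"
    then show "Apos R x" using dual_to_Apos[OF assms(1) x] unfolding \<Phi>_def by simp
  qed
  show ?thesis using P1 P2 P3 P4 by blast
qed

end
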